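(* Let $G$ and $H$ be connected graphs of orders $m$ and $n\geq 2$, respectively, with $\mathrm{ldim}_f(H)=\frac{n}{2}$. Then $\mathrm{ldim}_f(G\square H)\geq \frac{n}{2}$.
   Context: All graphs are finite, simple and connected; $d$ is the shortest-path distance. For an edge $uv$ of a graph $X$, $L_X(uv)=\{x\in V(X): d_X(u,x)\neq d_X(v,x)\}$. A function $f:V(X)\to[0,1]$ is a local resolving function of $X$ if $\sum_{x\in L_X(uv)}f(x)\geq 1$ for every edge $uv$; $\mathrm{ldim}_f(X)$ is the minimum of $\sum_{v}f(v)$ over all local resolving functions. The Cartesian product $G\square H$ has vertex set $V(G)\times V(H)$, with $(u_1,v_1)$ adjacent to $(u_2,v_2)$ iff ($u_1u_2\in E(G)$ and $v_1=v_2$) or ($u_1=u_2$ and $v_1v_2\in E(H)$). *)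

theory Defs
  imports Complex_Main
begin

definition simple_graph :: "'a set \<Rightarrow> 'a set set \<Rightarrow> bool" where
  "simple_graph V E \<longleftrightarrow> finite V \<and> V \<noteq> {} \<and>
     (\<forall>e\<in>E. \<exists>u v. e = {u, v} \<and> u \<in> V \<and> v \<in> V \<and> u \<noteq> v)"

definition is_walk :: "'a set \<Rightarrow> 'a set set \<Rightarrow> 'a list \<Rightarrow> bool" where
  "is_walk V E p \<longleftrightarrow> p \<noteq> [] \<and> set p \<subseteq> V \<and>
     (\<forall>i. Suc i < length p \<longrightarrow> {p ! i, p ! Suc i} \<in> E)"

definition walk_betw :: "'a set \<Rightarrow> 'a set set \<Rightarrow> 'a \<Rightarrow> nat \<Rightarrow> 'a \<Rightarrow> bool" where
  "walk_betw V E u k v \<longleftrightarrow>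
     (\<exists>p. is_walk V E p \<and> hd p = u \<and> last p = v \<and> length p = Suc k)"

definition connected_graph :: "'a set \<Rightarrow> 'a set set \<Rightarrow> bool" where
  "connected_graph V E \<longleftrightarrow> simple_graph V E \<and>
     (\<forall>u\<in>V. \<forall>v\<in>V. \<exists>k. walk_betw V E u k v)"

text \<open>Shortest-path distance (meaningful for connected graphs).\<close>

definition gdist :: "'a set \<Rightarrow> 'a set set \<Rightarrow> 'a \<Rightarrow> 'a \<Rightarrow> nat" where
  "gdist V E u v = (LEAST k. walk_betw V E u k v)"

definition resolving_set_of_edge :: "'a set \<Rightarrow> 'a set set \<Rightarrow> 'a \<Rightarrow> 'a \<Rightarrow> 'a set" where
  "resolving_set_of_edge V E u v = {x \<in> V. gdist V E u x \<noteq> gdist V E v x}"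

definition local_resolving_function :: "'a set \<Rightarrow> 'a set set \<Rightarrow> ('a \<Rightarrow> real) \<Rightarrow> bool" where
  "local_resolving_function V E f \<longleftrightarrow>
     (\<forall>x\<in>V. 0 \<le> f x \<and> f x \<le> 1) \<and>
     (\<forall>u v. {u, v} \<in> E \<longrightarrow> (\<Sum>x\<in>resolving_set_of_edge V E u v. f x) \<ge> 1)"

text \<open>Fractional local metric dimension: minimum (here infimum; the minimum is
  attained, being a linear program) of the total weight.\<close>

definition ldim_f :: "'a set \<Rightarrow> 'a set set \<Rightarrow> real" where
  "ldim_f V E = Inf {(\<Sum>x\<in>V. f x) | f. local_resolving_function V E f}"

definition cart_vertices :: "'a set \<Rightarrow> 'b set \<Rightarrow> ('a \<times> 'b) set" where
  "cart_vertices VG VH = VG \<times> VH"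

definition cart_edges ::
  "'a set \<Rightarrow> 'a set set \<Rightarrow> 'b set \<Rightarrow> 'b set set \<Rightarrow> ('a \<times> 'b) set set" where
  "cart_edges VG EG VH EH =
     {{(u1, v), (u2, v)} | u1 u2 v. {u1, u2} \<in> EG \<and> v \<in> VH} \<union>
     {{(u, v1), (u, v2)} | u v1 v2. u \<in> VG \<and> {v1, v2} \<in> EH}"

end

theory Submission
  imports Defs
begin

inductive W :: "'a set \<Rightarrow> 'a set set \<Rightarrow> 'a \<Rightarrow> nat \<Rightarrow> 'a \<Rightarrow> bool" for V E where
  W0: "u \<in> V \<Longrightarrow> W V E u 0 u"
| WS: "u \<in> V \<Longrightarrow> {u,w} \<in> E \<Longrightarrow> W V E w k v \<Longrightarrow> W V E u (Suc k) v"

lemma walk_to_W: "is_walk V E p \<Longrightarrow> W V E (hd p) (length p - 1) (last p)"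
proof (induction p)
  case Nil
  then show ?case by (simp add: is_walk_def)
next
  case (Cons a p)
  show ?case
  proof (cases "p = []")
    case True
    then show ?thesis using Cons.prems by (auto simp: is_walk_def intro: W0)
  next
    case False
    have wp: "is_walk V E p" using Cons.prems False unfolding is_walk_def
      by (metis Suc_less_eq length_Cons nth_Cons_Suc set_subset_Cons subset_trans)
    have e: "{a, hd p} \<in> E" using Cons.prems False unfolding is_walk_def
      by (metis hd_conv_nth length_Cons length_greater_0_conv nth_Cons_0 nth_Cons_Suc zero_less_Suc Suc_less_eq)
    have a: "a \<in> V" using Cons.prems unfolding is_walk_def by auto
    have "W V E a (Suc (length p - 1)) (last p)" using WS[OF a e Cons.IH[OF wp]] .
    then show ?thesis using False by simp
  qed
qed

lemma W_to_walk: "W V E u k v \<Longrightarrow> walk_betw V E u k v"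
proof (induction rule: W.induct)
  case (W0 u)
  then show ?case unfolding walk_betw_def is_walk_def by (intro exI[of _ "[u]"]) auto
next
  case (WS u w k v)
  then obtain p where p: "is_walk V E p" "hd p = w" "last p = v" "length p = Suc k"
    unfolding walk_betw_def by blast
  have "is_walk V E (u # p)"
    unfolding is_walk_def
  proof (intro conjI allI impI)
    show "u # p \<noteq> []" by simp
    show "set (u # p) \<subseteq> V" using p(1) WS(1) unfolding is_walk_def by auto
    fix i assume i: "Suc i < length (u # p)"
    show "{(u # p) ! i, (u # p) ! Suc i} \<in> E"
    proof (cases i)
      case 0
      then show ?thesis using p WS(2) by (simp add: hd_conv_nth is_walk_def)
    next
      case (Suc j)
      then show ?thesis using p i unfolding is_walk_def by auto
    qed
  qed
  then show ?case unfolding walk_betw_def using p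
    by (intro exI[of _ "u # p"]) (auto simp: is_walk_def)
qed

lemma walk_betw_W: "walk_betw V E u k v \<longleftrightarrow> W V E u k v"
proof
  assume "walk_betw V E u k v"
  then obtain p where "is_walk V E p" "hd p = u" "last p = v" "length p = Suc k"
    unfolding walk_betw_def by blast
  then show "W V E u k v" using walk_to_W[of V E p] by simp
qed (rule W_to_walk)

lemma W_0: "W V E u 0 v \<Longrightarrow> u = v"
  by (erule W.cases) auto

lemma W_V: "W V E u k v \<Longrightarrow> u \<in> V \<and> v \<in> V"
  by (induction rule: W.induct) auto

lemma gdist_W: "W V E u k v \<Longrightarrow> W V E u (gdist V E u v) v \<and> gdist V E u v \<le> k"
  unfolding gdist_def walk_betw_W[symmetric]
  by (metis LeastI Least_le)

lemma W_lift_H: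
  assumes "W VH EH v b y" "x \<in> VG"
  shows "W (cart_vertices VG VH) (cart_edges VG EG VH EH) (x,v) b (x,y)"
  using assms(1)
proof (induction rule: W.induct)
  case (W0 u)
  then show ?case using assms(2) by (intro W.W0) (auto simp: cart_vertices_def)
next
  case (WS u w k v)
  have "{(x,u),(x,w)} \<in> cart_edges VG EG VH EH"
    unfolding cart_edges_def using WS(2) assms(2) by blast
  then show ?case using WS assms(2) by (intro W.WS) (auto simp: cart_vertices_def)
qed

lemma W_prod_up:
  assumes "W VG EG u a x" "W VH EH v b y"
  shows "W (cart_vertices VG VH) (cart_edges VG EG VH EH) (u,v) (a+b) (x,y)"
  using assms(1)
proof (induction rule: W.induct)
  case (W0 u)
  then show ?case using W_lift_H[OF assms(2)] by simp
next
  case (WS u w k x)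
  have vV: "v \<in> VH" using W_V[OF assms(2)] by blast
  have "{(u,v),(w,v)} \<in> cart_edges VG EG VH EH"
    unfolding cart_edges_def using WS(2) vV by blast
  then show ?case using WS vV by (auto simp: cart_vertices_def intro: W.WS)
qed

lemma cart_edge_cases:
  assumes "{(u,v),(u',v')} \<in> cart_edges VG EG VH EH"
  shows "(v = v' \<and> {u,u'} \<in> EG) \<or> (u = u' \<and> {v,v'} \<in> EH)"
proof -
  from assms consider
    (a) u1 u2 w where "{(u,v),(u',v')} = {(u1,w),(u2,w)}" "{u1,u2} \<in> EG"
  | (b) x v1 v2 where "{(u,v),(u',v')} = {(x,v1),(x,v2)}" "{v1,v2} \<in> EH"
    unfolding cart_edges_def by blast
  then show ?thesis
  proof cases
    case a
    from a(1) have "((u,v) = (u1,w) \<and> (u',v') = (u2,w)) \<or> ((u,v) = (u2,w) \<and> (u',v') = (u1,w))"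
      by (simp add: doubleton_eq_iff)
    then show ?thesis
    proof
      assume "(u,v) = (u1,w) \<and> (u',v') = (u2,w)" then show ?thesis using a(2) by simp
    next
      assume "(u,v) = (u2,w) \<and> (u',v') = (u1,w)" then show ?thesis using a(2) by (simp add: insert_commute)
    qed
  next
    case b
    from b(1) have "((u,v) = (x,v1) \<and> (u',v') = (x,v2)) \<or> ((u,v) = (x,v2) \<and> (u',v') = (x,v1))"
      by (simp add: doubleton_eq_iff)
    then show ?thesis
    proof
      assume "(u,v) = (x,v1) \<and> (u',v') = (x,v2)" then show ?thesis using b(2) by simp
    next
      assume "(u,v) = (x,v2) \<and> (u',v') = (x,v1)" then show ?thesis using b(2) by (simp add: insert_commute)
    qed
  qed
qed

lemma W_prod_down:
  assumes "W (cart_vertices VG VH) (cart_edges VG EG VH EH) p k q"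
  shows "\<exists>a b. a + b = k \<and> W VG EG (fst p) a (fst q) \<and> W VH EH (snd p) b (snd q)"
  using assms
proof (induction rule: W.induct)
  case (W0 u)
  then show ?case by (auto simp: cart_vertices_def intro!: W.W0)
next
  case (WS p w k q)
  obtain a b where ab: "a + b = k" "W VG EG (fst w) a (fst q)" "W VH EH (snd w) b (snd q)"
    using WS.IH by blast
  have pV: "fst p \<in> VG" "snd p \<in> VH" using WS(1) by (auto simp: cart_vertices_def)
  have "{(fst p, snd p),(fst w, snd w)} \<in> cart_edges VG EG VH EH" using WS(2) by simp
  then have "(snd p = snd w \<and> {fst p, fst w} \<in> EG) \<or> (fst p = fst w \<and> {snd p, snd w} \<in> EH)"
    by (rule cart_edge_cases)
  then consider "snd p = snd w" "{fst p, fst w} \<in> EG" | "fst p = fst w" "{snd p, snd w} \<in> EH"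
    by blast
  then show ?case
  proof cases
    case 1
    then show ?thesis using ab pV by (intro exI[of _ "Suc a"] exI[of _ b]) (auto intro: W.WS)
  next
    case 2
    then show ?thesis using ab pV by (intro exI[of _ a] exI[of _ "Suc b"]) (auto intro: W.WS)
  qed
qed

lemma conn_W: "connected_graph V E \<Longrightarrow> u \<in> V \<Longrightarrow> v \<in> V \<Longrightarrow> \<exists>k. W V E u k v"
  unfolding connected_graph_def walk_betw_W by blast

lemma gdist_prod:
  assumes "connected_graph VG EG" "connected_graph VH EH"
    "u \<in> VG" "x \<in> VG" "v \<in> VH" "y \<in> VH"
  shows "gdist (cart_vertices VG VH) (cart_edges VG EG VH EH) (u,v) (x,y)
         = gdist VG EG u x + gdist VH EH v y"
proof -
  obtain a where a: "W VG EG u a x" using conn_W assms by metis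
  obtain b where b: "W VH EH v b y" using conn_W assms by metis
  have ga: "W VG EG u (gdist VG EG u x) x" using gdist_W[OF a] by blast
  have gb: "W VH EH v (gdist VH EH v y) y" using gdist_W[OF b] by blast
  have w: "W (cart_vertices VG VH) (cart_edges VG EG VH EH) (u,v) (gdist VG EG u x + gdist VH EH v y) (x,y)"
    using W_prod_up[OF ga gb] .
  from gdist_W[OF w] have le: "gdist (cart_vertices VG VH) (cart_edges VG EG VH EH) (u,v) (x,y)
         \<le> gdist VG EG u x + gdist VH EH v y"
    and w2: "W (cart_vertices VG VH) (cart_edges VG EG VH EH) (u,v)
      (gdist (cart_vertices VG VH) (cart_edges VG EG VH EH) (u,v) (x,y)) (x,y)" by auto
  obtain a' b' where "a' + b' = gdist (cart_vertices VG VH) (cart_edges VG EG VH EH) (u,v) (x,y)"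
    "W VG EG u a' x" "W VH EH v b' y" using W_prod_down[OF w2] by auto
  then have "gdist VG EG u x + gdist VH EH v y
      \<le> gdist (cart_vertices VG VH) (cart_edges VG EG VH EH) (u,v) (x,y)"
    using gdist_W by (metis add_mono)
  then show ?thesis using le by simp
qed

lemma gdist_self: "u \<in> V \<Longrightarrow> gdist V E u u = 0"
  using gdist_W[OF W.W0[of u V E]] by simp

lemma gdist_edge_nz:
  assumes "{q,p} \<in> E" "p \<in> V" "q \<in> V" "q \<noteq> p"
  shows "gdist V E q p \<noteq> 0"
proof
  have "W V E q (Suc 0) p" using assms by (intro W.WS[of q V p E] W.W0) auto
  from gdist_W[OF this] have "W V E q (gdist V E q p) p" by blast
  moreover assume "gdist V E q p = 0"
  ultimately show False using W_0 assms(4) by fastforce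
qed

lemma sg_edge:
  assumes "connected_graph V E" "{a,b} \<in> E"
  shows "a \<in> V \<and> b \<in> V \<and> a \<noteq> b"
proof -
  have "simple_graph V E" using assms(1) unfolding connected_graph_def by (rule conjunct1)
  then have "\<forall>e\<in>E. \<exists>u v. e = {u, v} \<and> u \<in> V \<and> v \<in> V \<and> u \<noteq> v"
    unfolding simple_graph_def by (elim conjE)
  then obtain u v where uv: "{a,b} = {u, v}" "u \<in> V" "v \<in> V" "u \<noteq> v"
    using assms(2) by blast
  then have "(a = u \<and> b = v) \<or> (a = v \<and> b = u)" by (simp add: doubleton_eq_iff)
  then show ?thesis using uv by auto
qed

lemma cart_edges_E:
  assumes "e \<in> cart_edges VG EG VH EH"
  obtains (a) u1 u2 w where "e = {(u1,w),(u2,w)}" "{u1,u2} \<in> EG" "w \<in> VH"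
  | (b) x v1 v2 where "e = {(x,v1),(x,v2)}" "x \<in> VG" "{v1,v2} \<in> EH"
  using assms unfolding cart_edges_def by blast

theorem theorem3p11:
  fixes VG :: "'a set" and EG :: "'a set set" and VH :: "'b set" and EH :: "'b set set"
    and m n :: nat
  assumes "connected_graph VG EG" and "connected_graph VH EH"
    and "card VG = m" and "card VH = n" and "n \<ge> 2"
    and "ldim_f VH EH = real n / 2"
  shows "ldim_f (cart_vertices VG VH) (cart_edges VG EG VH EH) \<ge> real n / 2"
proof -
  let ?P = "cart_vertices VG VH" and ?Q = "cart_edges VG EG VH EH"
  have finG: "finite VG" "VG \<noteq> {}" and finH: "finite VH"
    using assms(1,2) unfolding connected_graph_def simple_graph_def by auto
  have finP: "finite ?P" using finG finH by (simp add: cart_vertices_def)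
  have edgeP: "p \<in> ?P \<and> q \<in> ?P \<and> p \<noteq> q" if "{p,q} \<in> ?Q" for p q
  proof -
    from that show ?thesis
    proof (cases rule: cart_edges_E)
      case (a u1 u2 w)
      have m: "u1 \<in> VG" "u2 \<in> VG" "u1 \<noteq> u2" using sg_edge[OF assms(1) a(2)] by auto
      have pq: "p \<in> {(u1,w),(u2,w)}" "q \<in> {(u1,w),(u2,w)}" unfolding a(1)[symmetric] by simp_all
      have r: "(u1,w) \<in> {p,q}" "(u2,w) \<in> {p,q}" unfolding a(1) by simp_all
      have "p \<noteq> q"
      proof
        assume "p = q"
        then show False using m(3) r by (metis prod.inject insert_absorb2 singletonD)
      qed
      then show ?thesis using pq m a by (auto simp: cart_vertices_def)
    next
      case (b x v1 v2)
      have m: "v1 \<in> VH" "v2 \<in> VH" "v1 \<noteq> v2" using sg_edge[OF assms(2) b(3)] by auto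
      have pq: "p \<in> {(x,v1),(x,v2)}" "q \<in> {(x,v1),(x,v2)}" unfolding b(1)[symmetric] by simp_all
      have r: "(x,v1) \<in> {p,q}" "(x,v2) \<in> {p,q}" unfolding b(1) by simp_all
      have "p \<noteq> q"
      proof
        assume "p = q"
        then show False using m(3) r by (metis prod.inject insert_absorb2 singletonD)
      qed
      then show ?thesis using pq m b by (auto simp: cart_vertices_def)
    qed
  qed
  have ne: "local_resolving_function ?P ?Q (\<lambda>_. 1)"
    unfolding local_resolving_function_def
  proof (intro conjI ballI allI impI)
    fix p q assume pq: "{p,q} \<in> ?Q"
    have pr: "p \<in> ?P" "q \<in> ?P" "p \<noteq> q" using edgeP[OF pq] by auto
    have qp: "{q,p} \<in> ?Q" using pq by (simp add: insert_commute)
    have nz: "gdist ?P ?Q q p \<noteq> 0" using gdist_edge_nz[OF qp pr(1) pr(2)] pr(3) by metis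
    have "p \<in> resolving_set_of_edge ?P ?Q p q"
      unfolding resolving_set_of_edge_def
      using gdist_self[OF pr(1), of ?Q] nz pr(1) by simp
    moreover have "finite (resolving_set_of_edge ?P ?Q p q)"
      using finP unfolding resolving_set_of_edge_def by simp
    ultimately have "0 < card (resolving_set_of_edge ?P ?Q p q)" using card_gt_0_iff by blast
    then show "(\<Sum>x\<in>resolving_set_of_edge ?P ?Q p q. (1::real)) \<ge> 1"
      by simp
  qed auto
  show ?thesis
    unfolding ldim_f_def
  proof (rule cInf_greatest)
    show "{sum f ?P |f. local_resolving_function ?P ?Q f} \<noteq> {}" using ne by blast
  next
    fix s assume "s \<in> {sum f ?P |f. local_resolving_function ?P ?Q f}"
    then obtain f where s: "s = sum f ?P" and f: "local_resolving_function ?P ?Q f" by blast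
    have f0: "\<And>z. z \<in> ?P \<Longrightarrow> 0 \<le> f z" using f unfolding local_resolving_function_def by auto
    define g where "g y = min 1 (\<Sum>x\<in>VG. f (x,y))" for y
    have g0: "0 \<le> g y" if "y \<in> VH" for y
      unfolding g_def using f0 that by (auto intro!: sum_nonneg simp: cart_vertices_def)
    have gl: "local_resolving_function VH EH g"
      unfolding local_resolving_function_def
    proof (intro conjI ballI allI impI)
      fix y assume "y \<in> VH" then show "0 \<le> g y" by (rule g0)
    next
      fix y show "g y \<le> 1" by (simp add: g_def)
    next
      fix v1 v2 assume e: "{v1, v2} \<in> EH"
      have v12: "v1 \<in> VH" "v2 \<in> VH" using sg_edge[OF assms(2) e] by auto
      obtain u where u: "u \<in> VG" using finG by blast
      let ?LH = "resolving_set_of_edge VH EH v1 v2"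
      have eP: "{(u,v1),(u,v2)} \<in> ?Q" unfolding cart_edges_def using u e by blast
      have sub: "resolving_set_of_edge ?P ?Q (u,v1) (u,v2) \<subseteq> VG \<times> ?LH"
      proof
        fix z assume z: "z \<in> resolving_set_of_edge ?P ?Q (u,v1) (u,v2)"
        obtain x y where xy: "z = (x,y)" by force
        have xyV: "x \<in> VG" "y \<in> VH" using z xy
          by (auto simp: resolving_set_of_edge_def cart_vertices_def)
        have "gdist ?P ?Q (u,v1) (x,y) \<noteq> gdist ?P ?Q (u,v2) (x,y)"
          using z xy by (simp add: resolving_set_of_edge_def)
        then have "gdist VH EH v1 y \<noteq> gdist VH EH v2 y"
          using gdist_prod[OF assms(1,2) u xyV(1) v12(1) xyV(2)]
            gdist_prod[OF assms(1,2) u xyV(1) v12(2) xyV(2)] by simp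
        then show "z \<in> VG \<times> ?LH" using xy xyV by (simp add: resolving_set_of_edge_def)
      qed
      have finLH: "finite ?LH" using finH by (simp add: resolving_set_of_edge_def)
      have LHsub: "?LH \<subseteq> VH" by (auto simp: resolving_set_of_edge_def)
      have "1 \<le> (\<Sum>z\<in>resolving_set_of_edge ?P ?Q (u,v1) (u,v2). f z)"
        using f eP unfolding local_resolving_function_def by blast
      also have "\<dots> \<le> (\<Sum>z\<in>VG \<times> ?LH. f z)"
        apply (rule sum_mono2)
        using finG finLH sub f0 LHsub by (auto simp: cart_vertices_def)
      also have "\<dots> = (\<Sum>x\<in>VG. \<Sum>y\<in>?LH. f (x,y))"
        using sum.cartesian_product[of "\<lambda>x y. f (x,y)" ?LH VG] by simp
      also have "\<dots> = (\<Sum>y\<in>?LH. \<Sum>x\<in>VG. f (x,y))"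
        by (rule sum.swap)
      finally have big: "1 \<le> (\<Sum>y\<in>?LH. \<Sum>x\<in>VG. f (x,y))" .
      show "1 \<le> sum g ?LH"
      proof (cases "\<exists>y\<in>?LH. 1 \<le> (\<Sum>x\<in>VG. f (x,y))")
        case True
        then obtain y where y: "y \<in> ?LH" "1 \<le> (\<Sum>x\<in>VG. f (x,y))" by blast
        have "g y = 1" using y(2) by (simp add: g_def)
        moreover have "g y \<le> sum g ?LH"
          using y(1) finLH g0 LHsub by (intro member_le_sum) auto
        ultimately show ?thesis by simp
      next
        case False
        then have "\<forall>y\<in>?LH. g y = (\<Sum>x\<in>VG. f (x,y))" by (auto simp: g_def)
        then show ?thesis using big by simp
      qed
    qed
    have "real n / 2 = ldim_f VH EH" using assms(6) by simp
    also have "\<dots> \<le> sum g VH"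
      unfolding ldim_f_def
    proof (rule cInf_lower)
      show "sum g VH \<in> {sum f VH |f. local_resolving_function VH EH f}" using gl by blast
      show "bdd_below {sum f VH |f. local_resolving_function VH EH f}"
        unfolding bdd_below_def local_resolving_function_def
        by (intro exI[of _ 0]) (auto intro: sum_nonneg)
    qed
    also have "\<dots> \<le> (\<Sum>y\<in>VH. \<Sum>x\<in>VG. f (x,y))"
      by (intro sum_mono) (simp add: g_def)
    also have "\<dots> = (\<Sum>x\<in>VG. \<Sum>y\<in>VH. f (x,y))"
      by (rule sum.swap)
    also have "\<dots> = s" unfolding s cart_vertices_def
      using sum.cartesian_product[of "\<lambda>x y. f (x,y)" VH VG] by simp
    finally show "real n / 2 \<le> s" .
  qed
qed

end
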